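(* In the probit setting below (with proper posterior), $\lambda:=\sup_{t\in(0,1)}\sup_{\alpha\ne0}\frac{\|\Sigma^{-1/2}X^TD(\hat B+t\alpha)X\alpha\|^2}{\|\Sigma^{1/2}\alpha\|^2}<1$.
   Context: Probit setting: covariates $X_1,\dots,X_n\in\mathbb{R}^p$, responses $Y_i\in\{0,1\}$, $X$ the $n\times p$ matrix with rows $X_i^T$; prior $\omega(\beta)\propto\exp\{-\frac12(\beta-v)^TQ(\beta-v)\}$, $Q$ positive definite or zero; posterior density $\propto\prod_i\Phi(X_i^T\beta)^{Y_i}(1-\Phi(X_i^T\beta))^{1-Y_i}\omega(\beta)$ ($\Phi,\phi$ standard normal cdf/pdf), assumed proper; $\Sigma=X^TX+Q$; $\hat B$ the posterior mode (unique maximizer of the posterior density). $g(\theta)=\theta\phi(\theta)/\Phi(\theta)+(\phi(\theta)/\Phi(\theta))^2$; $D(\beta)$ is the diagonal $n\times n$ matrix with $i$th entry $1-g(X_i^T\beta)1_{\{1\}}(Y_i)-g(-X_i^T\beta)1_{\{0\}}(Y_i)$. *)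

theory Defs
  imports "HOL-Probability.Probability"
begin

definition phi :: "real \<Rightarrow> real" where
  "phi x = std_normal_density x"

definition Phi :: "real \<Rightarrow> real" where
  "Phi x = (LBINT t:{..x}. std_normal_density t)"

definition gfun :: "real \<Rightarrow> real" where
  "gfun \<theta> = \<theta> * phi \<theta> / Phi \<theta> + (phi \<theta> / Phi \<theta>)\<^sup>2"

definition prior_dens :: "real^'p^'p \<Rightarrow> real^'p \<Rightarrow> real^'p \<Rightarrow> real" where
  "prior_dens Q v \<beta> = exp (- (1/2) * ((\<beta> - v) \<bullet> (Q *v (\<beta> - v))))"

definition post_dens ::
  "real^'p^'n \<Rightarrow> real^'n \<Rightarrow> real^'p^'p \<Rightarrow> real^'p \<Rightarrow> real^'p \<Rightarrow> real" where
  "post_dens X Y Q v \<beta> =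
     (\<Prod>i\<in>UNIV. (if Y $ i = 1 then Phi ((X $ i) \<bullet> \<beta>) else 1 - Phi ((X $ i) \<bullet> \<beta>)))
     * prior_dens Q v \<beta>"

definition Dmat :: "real^'p^'n \<Rightarrow> real^'n \<Rightarrow> real^'p \<Rightarrow> real^'n^'n" where
  "Dmat X Y \<beta> = (\<chi> i j. if i = j then
      1 - gfun ((X $ i) \<bullet> \<beta>) * (if Y $ i = 1 then 1 else 0)
        - gfun (- ((X $ i) \<bullet> \<beta>)) * (if Y $ i = 0 then 1 else 0)
    else 0)"

definition pos_def_mat :: "real^'p^'p \<Rightarrow> bool" where
  "pos_def_mat Q \<longleftrightarrow> transpose Q = Q \<and> (\<forall>x. x \<noteq> 0 \<longrightarrow> x \<bullet> (Q *v x) > 0)"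

end

theory Submission
  imports Defs "HOL-Real_Asymp.Real_Asymp"
begin


lemma phi_pos: "phi x > 0" unfolding phi_def by (simp add: std_normal_density_def)
lemma cont_phi: "continuous_on S phi" unfolding phi_def std_normal_density_def
  by (intro continuous_intros) auto
lemma phi_integrable: "integrable lborel phi"
  unfolding phi_def by simp

lemma phi_set_integrable: "A \<in> sets lborel \<Longrightarrow> integrable lborel (\<lambda>t. indicator A t * phi t)"
  using integrable_mult_indicator[OF _ phi_integrable, of A] by simp

lemma phi_set_integrable': "A \<in> sets lborel \<Longrightarrow> integrable lborel (\<lambda>t. indicator A t * std_normal_density t)"
  using phi_set_integrable[of A] unfolding phi_def by simp

lemma Phi_interval: "Phi x = (LBINT t=-\<infinity>..ereal x. phi t)"
proof -
  have "Phi x = (LBINT t:{..x}. phi t)" unfolding Phi_def phi_def ..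
  also have "\<dots> = (LBINT t:{..<x}. phi t)"
  proof (rule set_integral_null_delta)
    have "({..x} - {..<x}) \<union> ({..<x} - {..x}) = {x}" by auto
    then show "({..x} - {..<x}) \<union> ({..<x} - {..x}) \<in> null_sets lborel" by (simp add: finite_imp_null_set_lborel)
  qed (auto simp: phi_integrable)
  finally show ?thesis by (simp add: interval_lebesgue_integral_def)
qed

lemma Phi_split: "Phi x = Phi 0 + (LBINT t=ereal 0..ereal x. phi t)"
proof -
  have "integrable lborel (\<lambda>t. indicator (einterval (- \<infinity>) (max (ereal 0) (ereal x))) t * phi t)"
    using integrable_mult_indicator[OF _ phi_integrable, of "einterval (- \<infinity>) (max (ereal 0) (ereal x))"]
    by simp
  then show ?thesis unfolding Phi_interval
    using interval_integral_sum[of "-\<infinity>" "ereal 0" "ereal x" phi]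
    by (auto simp: interval_lebesgue_integrable_def set_integrable_def)
qed

lemma Phi_deriv: "(Phi has_real_derivative phi x) (at x)"
proof -
  define a where "a = min 0 x - 1"
  define b where "b = max 0 x + 1"
  have "((\<lambda>u. LBINT y=ereal 0..ereal u. phi y) has_vector_derivative (phi x)) (at x within {a..b})"
    using interval_integral_FTC2[of a 0 b phi x] by (auto simp: a_def b_def cont_phi)
  then have "((\<lambda>u. LBINT y=ereal 0..ereal u. phi y) has_vector_derivative (phi x)) (at x)"
    using at_within_Icc_at[of a x b] by (simp add: a_def b_def)
  then have "((\<lambda>u. Phi 0 + (LBINT y=ereal 0..ereal u. phi y)) has_real_derivative (phi x)) (at x)"
    by (auto intro!: derivative_eq_intros simp: has_real_derivative_iff_has_vector_derivative)
  then show ?thesis using Phi_split by (metis (no_types, lifting) ext) 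
qed

lemma phi_deriv: "(phi has_real_derivative (- x * phi x)) (at x)"
  unfolding phi_def std_normal_density_def
  by (rule derivative_eq_intros refl | simp)+

lemma Phi_nonneg: "Phi x \<ge> 0"
  unfolding Phi_def set_lebesgue_integral_def
  by (auto intro!: Bochner_Integration.integral_nonneg simp: indicator_def)

lemma Phi_le1: "Phi x \<le> 1"
proof -
  have "Phi x \<le> (\<integral>t. std_normal_density t \<partial>lborel)"
    unfolding Phi_def set_lebesgue_integral_def
    by (rule integral_mono) (use phi_set_integrable'[of "{..x}"] in \<open>auto simp: indicator_def\<close>)
  then show ?thesis by simp
qed

lemma Phi_mono: "x \<le> y \<Longrightarrow> Phi x \<le> Phi y"
  by (rule DERIV_nonneg_imp_nondecreasing) (auto intro!: exI Phi_deriv less_imp_le[OF phi_pos])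

lemma Phi_pos: "Phi x > 0"
proof -
  have "Phi (x - 1) < Phi x"
    by (rule DERIV_pos_imp_increasing) (auto intro!: exI Phi_deriv phi_pos)
  then show ?thesis using Phi_nonneg[of "x-1"] by linarith
qed

lemma Phi_cont: "isCont Phi x"
  using Phi_deriv DERIV_isCont by blast

lemma Phi_at_bot: "(Phi \<longlongrightarrow> 0) at_bot"
proof -
  have lim: "((\<lambda>a. LBINT t:{a..0}. phi t) \<longlongrightarrow> (LBINT t:{..0}. phi t)) at_bot"
    by (rule tendsto_set_lebesgue_integral_at_bot)
       (auto simp: set_integrable_def intro!: phi_set_integrable)
  have P0: "Phi 0 = (LBINT t:{..0}. phi t)" unfolding Phi_def phi_def ..
  have "eventually (\<lambda>a. Phi 0 - (LBINT t:{a..0}. phi t) = Phi a) at_bot"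
  proof (rule eventually_at_bot_linorder[THEN iffD2], intro exI allI impI)
    fix a :: real assume a: "a \<le> -1"
    have "Phi a = Phi 0 + (LBINT t=ereal 0..ereal a. phi t)" by (rule Phi_split)
    also have "(LBINT t=ereal 0..ereal a. phi t) = - (LBINT t:{a<..<0}. phi t)"
      using a by (simp add: interval_lebesgue_integral_def)
    also have "(LBINT t:{a<..<0}. phi t) = (LBINT t:{a..0}. phi t)"
    proof (rule set_integral_null_delta)
      have "({a<..<0} - {a..0}) \<union> ({a..0} - {a<..<0}) = {a, 0}" using a by auto
      then show "({a<..<0} - {a..0}) \<union> ({a..0} - {a<..<0}) \<in> null_sets lborel"
        by (simp add: finite_imp_null_set_lborel)
    qed (auto simp: phi_integrable)
    finally show "Phi 0 - (LBINT t:{a..0}. phi t) = Phi a" by simp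
  qed
  moreover have "((\<lambda>a. Phi 0 - (LBINT t:{a..0}. phi t)) \<longlongrightarrow> 0) at_bot"
    using tendsto_diff[OF tendsto_const lim, of "Phi 0"] P0 by simp
  ultimately show ?thesis by (rule Lim_transform_eventually[rotated])
qed

lemma nonneg_at_bot:
  fixes h h' :: "real \<Rightarrow> real"
  assumes "\<And>x. x \<le> b \<Longrightarrow> (h has_real_derivative h' x) (at x)"
    and "\<And>x. x \<le> b \<Longrightarrow> h' x \<ge> 0" and "(h \<longlongrightarrow> 0) at_bot"
  shows "h b \<ge> 0"
proof -
  have "\<forall>x\<le>b. h x \<le> h b"
  proof (intro allI impI)
    fix x assume "x \<le> b"
    then show "h x \<le> h b"
    proof (rule DERIV_nonneg_imp_nondecreasing)
      fix y assume "x \<le> y" "y \<le> b"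
      then show "\<exists>d. DERIV h y :> d \<and> d \<ge> 0" using assms(1,2) by blast
    qed
  qed
  then have "eventually (\<lambda>x. h x \<le> h b) at_bot"
    by (auto simp: eventually_at_bot_linorder)
  then show ?thesis using tendsto_upperbound[OF assms(3)] by auto
qed


lemma phi_lims: "(phi \<longlongrightarrow> 0) at_bot" "((\<lambda>x. x * phi x) \<longlongrightarrow> 0) at_bot"
   "((\<lambda>x. phi x / x) \<longlongrightarrow> 0) at_bot" "((\<lambda>x. x * phi x / (x^2 + 1/2)) \<longlongrightarrow> 0) at_bot"
  unfolding phi_def std_normal_density_def by real_asymp+

lemma Phi_mills: assumes "x < 0" shows "Phi x \<le> - phi x / x"
proof -
  have "0 \<le> - phi x / x - Phi x"
  proof (rule nonneg_at_bot[where h = "\<lambda>t. - phi t / t - Phi t" and b = x and h' = "\<lambda>t. phi t / t^2"])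
    fix t assume "t \<le> x"
    with assms have t: "t \<noteq> 0" by auto
    show "((\<lambda>t. - phi t / t - Phi t) has_real_derivative phi t / t^2) (at t)"
      using t by (auto intro!: derivative_eq_intros phi_deriv Phi_deriv simp: field_simps power2_eq_square)
    show "phi t / t^2 \<ge> 0" using phi_pos[of t] by simp
  next
    show "((\<lambda>t. - phi t / t - Phi t) \<longlongrightarrow> 0) at_bot"
      using tendsto_diff[OF tendsto_minus[OF phi_lims(3)] Phi_at_bot] by simp
  qed
  then show ?thesis by simp
qed

lemma xPhi_at_bot: "((\<lambda>x. x * Phi x) \<longlongrightarrow> 0) at_bot"
proof (rule tendsto_sandwich[where f = "\<lambda>x. - phi x" and h = "\<lambda>x. 0"])
  show "eventually (\<lambda>x. - phi x \<le> x * Phi x) at_bot"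
    unfolding eventually_at_bot_linorder
  proof (intro exI[of _ "-1"] allI impI)
    fix x :: real assume x: "x \<le> -1"
    have "x * (- phi x / x) \<le> x * Phi x"
      using Phi_mills[of x] x by (intro mult_left_mono_neg) auto
    then show "- phi x \<le> x * Phi x" using x by simp
  qed
  show "eventually (\<lambda>x. x * Phi x \<le> 0) at_bot"
    unfolding eventually_at_bot_linorder
    by (auto intro!: exI[of _ 0] mult_nonpos_nonneg Phi_nonneg)
qed (use tendsto_minus[OF phi_lims(1)] in auto)

lemma x2Phi_at_bot: "((\<lambda>x. x^2 * Phi x) \<longlongrightarrow> 0) at_bot"
proof (rule tendsto_sandwich[where f = "\<lambda>x. 0" and h = "\<lambda>x. - (x * phi x)"])
  show "eventually (\<lambda>x. x^2 * Phi x \<le> - (x * phi x)) at_bot"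
    unfolding eventually_at_bot_linorder
  proof (intro exI[of _ "-1"] allI impI)
    fix x :: real assume x: "x \<le> -1"
    have "x^2 * Phi x \<le> x^2 * (- phi x / x)"
      using Phi_mills[of x] x by (intro mult_left_mono) auto
    then show "x^2 * Phi x \<le> - (x * phi x)" using x by (simp add: power2_eq_square)
  qed
  show "eventually (\<lambda>x. 0 \<le> x^2 * Phi x) at_bot"
    by (intro always_eventually allI) (simp add: Phi_nonneg)
qed (use tendsto_minus[OF phi_lims(2)] in auto)

lemma m_pos: "x * Phi x + phi x > 0"
proof -
  have "0 < x * Phi x + phi x"
  proof (rule DERIV_pos_imp_increasing_at_bot[where f = "\<lambda>x. x * Phi x + phi x" and b = x])
    fix t :: real assume "t \<le> x"
    show "\<exists>y. ((\<lambda>x. x * Phi x + phi x) has_real_derivative y) (at t) \<and> 0 < y"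
      by (rule exI[of _ "Phi t"]) (auto intro!: derivative_eq_intros phi_deriv Phi_deriv Phi_pos)
  next
    show "((\<lambda>x. x * Phi x + phi x) \<longlongrightarrow> 0) at_bot"
      using tendsto_add[OF xPhi_at_bot phi_lims(1)] by simp
  qed
  then show ?thesis .
qed

lemma J_pos: "(1 + x^2) * Phi x + x * phi x > 0"
proof -
  have "0 < (1 + x^2) * Phi x + x * phi x"
  proof (rule DERIV_pos_imp_increasing_at_bot[where f = "\<lambda>x. (1 + x^2) * Phi x + x * phi x" and b = x])
    fix t :: real assume "t \<le> x"
    show "\<exists>y. ((\<lambda>x. (1 + x^2) * Phi x + x * phi x) has_real_derivative y) (at t) \<and> 0 < y"
      by (rule exI[of _ "2 * (t * Phi t + phi t)"])
         (use m_pos[of t] in \<open>auto intro!: derivative_eq_intros phi_deriv Phi_deriv simp: algebra_simps power2_eq_square\<close>)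
  next
    show "((\<lambda>x. (1 + x^2) * Phi x + x * phi x) \<longlongrightarrow> 0) at_bot"
      using tendsto_add[OF tendsto_add[OF Phi_at_bot x2Phi_at_bot] phi_lims(2)]
      by (simp add: algebra_simps)
  qed
  then show ?thesis .
qed

lemma k_nonneg: "x * phi x * Phi x + (phi x)^2 \<le> (Phi x)^2"
proof -
  have "0 \<le> (Phi x)^2 - x * phi x * Phi x - (phi x)^2"
  proof (rule nonneg_at_bot[where h = "\<lambda>t. (Phi t)^2 - t * phi t * Phi t - (phi t)^2" and b = x and h' = "\<lambda>t. phi t * ((1 + t^2) * Phi t + t * phi t)"])
    fix t :: real assume "t \<le> x"
    show "((\<lambda>t. (Phi t)^2 - t * phi t * Phi t - (phi t)^2) has_real_derivative
        phi t * ((1 + t^2) * Phi t + t * phi t)) (at t)"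
      by (auto intro!: derivative_eq_intros phi_deriv Phi_deriv simp: algebra_simps power2_eq_square)
    show "0 \<le> phi t * ((1 + t^2) * Phi t + t * phi t)"
      using J_pos[of t] phi_pos[of t] by simp
  next
    show "((\<lambda>t. (Phi t)^2 - t * phi t * Phi t - (phi t)^2) \<longlongrightarrow> 0) at_bot"
      using tendsto_diff[OF tendsto_diff[OF tendsto_power[OF Phi_at_bot, of 2]
          tendsto_mult[OF phi_lims(2) Phi_at_bot]] tendsto_power[OF phi_lims(1), of 2]]
      by simp
  qed
  then show ?thesis by simp
qed

lemma gfun_alt: "gfun x = phi x * (x * Phi x + phi x) / (Phi x)^2"
  using Phi_pos[of x] unfolding gfun_def by (simp add: field_simps power2_eq_square)

lemma gfun_pos: "gfun x > 0"
  unfolding gfun_alt using Phi_pos[of x] phi_pos[of x] m_pos[of x] by simp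

lemma gfun_le1: "gfun x \<le> 1"
proof -
  have "gfun x = (x * phi x * Phi x + (phi x)^2) / (Phi x)^2"
    unfolding gfun_alt by (simp add: algebra_simps power2_eq_square)
  also have "\<dots> \<le> 1" using k_nonneg[of x] Phi_pos[of x] by simp
  finally show ?thesis .
qed

lemma gfun_cont: "isCont gfun x"
  unfolding gfun_def using Phi_pos[of x]
  by (auto intro!: continuous_intros Phi_cont DERIV_isCont[OF phi_deriv])

lemma alg_id: "(q::real) \<noteq> 0 \<Longrightarrow> q = t^2 + 1/2 \<Longrightarrow>
   ((-p + t*(t*p))*q - (-t*p)*(2*t))/(q*q) - p = p*(t^2/2 - 3/4)/q^2"
  by (simp add: field_simps power2_eq_square) algebra

lemma mills2: assumes "x \<le> -2" shows "Phi x * (x^2 + 1/2) \<le> - x * phi x"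
proof -
  have "0 \<le> - x * phi x / (x^2 + 1/2) - Phi x"
  proof (rule nonneg_at_bot[where h = "\<lambda>t. - t * phi t / (t^2 + 1/2) - Phi t" and b = x and h' = "\<lambda>t. phi t * (t^2/2 - 3/4) / (t^2 + 1/2)^2"])
    fix t :: real assume t: "t \<le> x"
    have q: "(t^2 + 1/2) \<noteq> 0" using zero_le_power2[of t] by linarith
    have d1: "((\<lambda>t. - t * phi t) has_real_derivative (-phi t + t*(t*phi t))) (at t)"
      by (auto intro!: derivative_eq_intros phi_deriv)
    have d2: "((\<lambda>t. t^2 + 1/2) has_real_derivative 2*t) (at t)"
      by (auto intro!: derivative_eq_intros)
    have d3: "((\<lambda>t. - t * phi t / (t^2 + 1/2) - Phi t) has_real_derivative
       ((-phi t + t*(t*phi t))*(t^2+1/2) - (-t*phi t)*(2*t))/((t^2+1/2)*(t^2+1/2)) - phi t) (at t)"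
      by (rule DERIV_diff[OF DERIV_divide[OF d1 d2 q] Phi_deriv])
    have eq: "((-phi t + t*(t*phi t))*(t^2+1/2) - (-t*phi t)*(2*t))/((t^2+1/2)*(t^2+1/2)) - phi t
       = phi t * (t^2/2 - 3/4) / (t^2 + 1/2)^2"
      using alg_id[OF q refl] .
    show "((\<lambda>t. - t * phi t / (t^2 + 1/2) - Phi t) has_real_derivative
        phi t * (t^2/2 - 3/4) / (t^2 + 1/2)^2) (at t)"
      using d3 eq by simp
    have "(-t)^2 \<ge> 2^2" by (rule power_mono) (use t assms in auto)
    then have "t^2 \<ge> 4" by simp
    then show "0 \<le> phi t * (t^2/2 - 3/4) / (t^2 + 1/2)^2"
      using phi_pos[of t] by simp
  next
    show "((\<lambda>t. - t * phi t / (t^2 + 1/2) - Phi t) \<longlongrightarrow> 0) at_bot"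
      using tendsto_diff[OF tendsto_minus[OF phi_lims(4)] Phi_at_bot] by simp
  qed
  moreover have "x^2 + 1/2 > 0" using zero_le_power2[of x] by linarith
  ultimately show ?thesis by (simp add: field_simps)
qed

lemma gfun_lower: assumes "x \<le> -2" shows "gfun x \<ge> 1/2"
proof -
  define y where "y = - x"
  have y: "y \<ge> 2" using assms y_def by simp
  let ?P = "Phi x" and ?p = "phi x"
  have P: "?P > 0" by (rule Phi_pos)
  have A: "?p * y \<ge> ?P * (y^2 + 1/2)" using mills2[OF assms] y_def by (simp add: mult.commute)
  have B: "y * (?p - y * ?P) \<ge> ?P / 2" using A by (simp add: algebra_simps power2_eq_square)
  have C: "(?p * y) * (y * (?p - y * ?P)) \<ge> (?P * (y^2 + 1/2)) * (?P / 2)"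
    by (rule mult_mono[OF A B]) (use P y phi_pos[of x] in auto)
  have D: "(?P * (y^2 + 1/2)) * (?P / 2) \<ge> y^2 * (?P^2 / 2)"
    using P by (simp add: algebra_simps power2_eq_square)
  have E: "y^2 * (?p * (?p - y * ?P)) \<ge> y^2 * (?P^2 / 2)"
  proof -
    have "y^2 * (?p * (?p - y * ?P)) = (?p * y) * (y * (?p - y * ?P))"
      by (simp add: algebra_simps power2_eq_square)
    then show ?thesis using C D by linarith
  qed
  have y2: "y^2 > 0" using y by simp
  have F: "?p * (?p - y * ?P) \<ge> ?P^2 / 2"
    using E by (simp only: mult_le_cancel_left_pos[OF y2])
  have "gfun x = ?p * (?p - y * ?P) / ?P^2"
    unfolding gfun_alt y_def by (simp add: algebra_simps)
  also have "\<dots> \<ge> 1/2"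
  proof -
    have "1/2 * ?P^2 \<le> ?p * (?p - y * ?P)" using F by linarith
    then show ?thesis using P by (subst le_divide_eq) auto
  qed
  finally show ?thesis .
qed


lemma mv_nth: "(X *v x) $ i = (X $ i) \<bullet> (x :: real^'p)"
  by (simp add: matrix_vector_mult_def inner_vec_def mult.commute)

lemma diag_mv: "((\<chi> i j. if i = j then d i else 0) *v (w::real^'n)) = (\<chi> i. d i * w $ i)"
proof -
  have "\<And>i. (\<Sum>j\<in>UNIV. (if i = j then d i else 0) * w $ j) = (\<Sum>j\<in>UNIV. if i = j then d i * w $ j else 0)"
    by (rule sum.cong) auto
  then show ?thesis by (simp add: matrix_vector_mult_def vec_eq_iff)
qed

lemma inner_transpose: "x \<bullet> (transpose X *v z) = (X *v x) \<bullet> (z :: real^'n)"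
  for X :: "real^'p^'n"
  by (metis dot_lmul_matrix inner_commute transpose_matrix_vector)

lemma quad_diag:
  fixes X :: "real^'p^'n"
  shows "x \<bullet> ((transpose X ** (\<chi> i j. if i = j then d i else 0) ** X) *v y) =
    (\<Sum>i\<in>UNIV. d i * (X$i \<bullet> x) * (X$i \<bullet> y))"
proof -
  have "(transpose X ** (\<chi> i j. if i = j then d i else 0) ** X) *v y =
      transpose X *v ((\<chi> i j. if i = j then d i else 0) *v (X *v y))"
    by (simp add: matrix_vector_mul_assoc matrix_mul_assoc)
  then have "x \<bullet> ((transpose X ** (\<chi> i j. if i = j then d i else 0) ** X) *v y) =
     (X *v x) \<bullet> (\<chi> i. d i * (X *v y) $ i)"
    by (simp only: inner_transpose diag_mv)
  then show ?thesis
    by (simp add: inner_vec_def mv_nth mult_ac)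
qed

lemma quad_XX:
  fixes X :: "real^'p^'n"
  shows "x \<bullet> ((transpose X ** X) *v y) = (\<Sum>i\<in>UNIV. (X$i \<bullet> x) * (X$i \<bullet> y))"
proof -
  have "(transpose X ** X) *v y = transpose X *v (X *v y)"
    by (simp add: matrix_vector_mul_assoc)
  then have "x \<bullet> ((transpose X ** X) *v y) = (X *v x) \<bullet> (X *v y)"
    by (simp only: inner_transpose)
  then show ?thesis
    by (simp add: inner_vec_def mv_nth)
qed

lemma weighted_CS:
  fixes d u v :: "'n \<Rightarrow> real"
  assumes "\<And>i. d i \<ge> 0"
  shows "(\<Sum>i\<in>I. d i * u i * v i)^2 \<le> (\<Sum>i\<in>I. d i * (u i)^2) * (\<Sum>i\<in>I. d i * (v i)^2)"
proof -
  have "(\<Sum>i\<in>I. (sqrt (d i) * u i) * (sqrt (d i) * v i))^2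
      \<le> (\<Sum>i\<in>I. (sqrt (d i) * u i)^2) * (\<Sum>i\<in>I. (sqrt (d i) * v i)^2)"
    by (rule Cauchy_Schwarz_ineq_sum)
  moreover have "\<And>i. (sqrt (d i) * u i) * (sqrt (d i) * v i) = d i * u i * v i"
    using assms by (simp add: algebra_simps flip: power2_eq_square)
  moreover have "\<And>i. (sqrt (d i) * u i)^2 = d i * (u i)^2" "\<And>i. (sqrt (d i) * v i)^2 = d i * (v i)^2"
    using assms by (simp_all add: power_mult_distrib)
  ultimately show ?thesis by simp
qed



definition gt :: "real^'p^'n \<Rightarrow> real^'n \<Rightarrow> real^'p \<Rightarrow> 'n \<Rightarrow> real" where
  "gt X Y \<beta> i = (if Y $ i = 1 then gfun (X $ i \<bullet> \<beta>) else gfun (- (X $ i \<bullet> \<beta>)))"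

lemma gt_pos: "gt X Y \<beta> i > 0" unfolding gt_def using gfun_pos by simp
lemma gt_le1: "gt X Y \<beta> i \<le> 1" unfolding gt_def using gfun_le1 by simp

definition defn :: "real^'p^'n \<Rightarrow> real^'n \<Rightarrow> real^'p^'p \<Rightarrow> real^'p \<Rightarrow> real^'p \<Rightarrow> real" where
  "defn X Y Q \<beta> a = (\<Sum>i\<in>UNIV. gt X Y \<beta> i * (X $ i \<bullet> a)^2) + a \<bullet> (Q *v a)"

definition qf :: "real^'p^'n \<Rightarrow> real^'n \<Rightarrow> real^'p \<Rightarrow> real^'p \<Rightarrow> real" where
  "qf X Y \<beta> a = (\<Sum>i\<in>UNIV. (1 - gt X Y \<beta> i) * (X $ i \<bullet> a)^2)"

lemma Dmat_eq:
  assumes Y01: "\<forall>i. Y $ i \<in> {0, 1}"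
  shows "Dmat X Y \<beta> = (\<chi> i j. if i = j then 1 - gt X Y \<beta> i else 0)"
proof -
  have "\<And>i. 1 - gfun (X $ i \<bullet> \<beta>) * (if Y $ i = 1 then 1 else 0)
        - gfun (- (X $ i \<bullet> \<beta>)) * (if Y $ i = 0 then 1 else 0) = 1 - gt X Y \<beta> i"
  proof -
    fix i
    have "Y $ i = 0 \<or> Y $ i = 1" using Y01 by auto
    then show "1 - gfun (X $ i \<bullet> \<beta>) * (if Y $ i = 1 then 1 else 0)
        - gfun (- (X $ i \<bullet> \<beta>)) * (if Y $ i = 0 then 1 else 0) = 1 - gt X Y \<beta> i"
      unfolding gt_def by auto
  qed
  note E = this
  show ?thesis unfolding Dmat_def vec_eq_iff by (simp only: vec_lambda_beta E) simp
qed

lemma A_quad: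
  assumes Y01: "\<forall>i. Y $ i \<in> {0, 1}"
  shows "x \<bullet> ((transpose X ** Dmat X Y \<beta> ** X) *v y) =
     (\<Sum>i\<in>UNIV. (1 - gt X Y \<beta> i) * (X$i \<bullet> x) * (X$i \<bullet> y))"
  unfolding Dmat_eq[OF Y01] by (rule quad_diag)

lemma S_quad:
  fixes X :: "real^'p^'n"
  shows "x \<bullet> ((transpose X ** X + Q) *v y) = (\<Sum>i\<in>UNIV. (X$i \<bullet> x) * (X$i \<bullet> y)) + x \<bullet> (Q *v y)"
  by (simp add: matrix_vector_mult_add_rdistrib inner_add_right quad_XX)

lemma S_split:
  fixes X :: "real^'p^'n"
  shows "a \<bullet> ((transpose X ** X + Q) *v a) = qf X Y \<beta> a + defn X Y Q \<beta> a"
proof -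
  have "(\<Sum>i\<in>UNIV. (X$i \<bullet> a) * (X$i \<bullet> a)) =
    (\<Sum>i\<in>UNIV. (1 - gt X Y \<beta> i) * (X $ i \<bullet> a)^2 + gt X Y \<beta> i * (X $ i \<bullet> a)^2)"
    by (rule sum.cong) (auto simp: algebra_simps power2_eq_square)
  then show ?thesis
    unfolding S_quad qf_def defn_def by (simp add: sum.distrib)
qed

lemma Q_nonneg: "pos_def_mat Q \<or> Q = 0 \<Longrightarrow> 0 \<le> a \<bullet> (Q *v a)"
  unfolding pos_def_mat_def by (cases "a = 0") (auto intro: less_imp_le)

lemma qf_nonneg: "0 \<le> qf X Y \<beta> a"
  unfolding qf_def by (intro sum_nonneg mult_nonneg_nonneg) (use gt_le1[of X Y \<beta>] in auto)

lemma ratio_le: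
  fixes X :: "real^'p^'n" and Q :: "real^'p^'p" and Binv :: "real^'p^'p" and \<beta> :: "real^'p"
  assumes Y01: "\<forall>i. Y $ i \<in> {0, 1}" and Qprior: "pos_def_mat Q \<or> Q = 0"
    and Sinv: "(transpose X ** X + Q) ** Binv = mat 1"
  defines "A \<equiv> transpose X ** Dmat X Y \<beta> ** X"
  shows "(A *v \<alpha>) \<bullet> (Binv *v (A *v \<alpha>)) \<le> qf X Y \<beta> \<alpha>"
proof -
  define S where "S = transpose X ** X + Q"
  define w where "w = A *v \<alpha>"
  define y where "y = Binv *v w"
  define q where "q = w \<bullet> y"
  define d where "d i = 1 - gt X Y \<beta> i" for i
  define u where "u i = X $ i \<bullet> y" for i
  define z where "z i = X $ i \<bullet> \<alpha>" for i
  have d0: "\<And>i. d i \<ge> 0" and d1: "\<And>i. d i \<le> 1" unfolding d_def using gt_le1[of X Y \<beta>] gt_pos[of X Y \<beta>]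
    by (simp_all add: less_imp_le)
  have h1: "y \<bullet> (A *v \<alpha>) = q" unfolding q_def w_def by (simp add: inner_commute)
  have "S *v y = w" unfolding y_def matrix_vector_mul_assoc S_def Sinv by simp
  then have h2: "y \<bullet> (S *v y) = q" unfolding q_def by (simp add: inner_commute)
  have e1: "y \<bullet> (A *v \<alpha>) = (\<Sum>i\<in>UNIV. d i * u i * z i)"
    unfolding A_def A_quad[OF Y01] d_def u_def z_def ..
  have e2: "y \<bullet> (A *v y) = (\<Sum>i\<in>UNIV. d i * (u i)^2)"
    unfolding A_def A_quad[OF Y01] d_def u_def by (simp add: power2_eq_square mult.assoc)
  have e3: "qf X Y \<beta> \<alpha> = (\<Sum>i\<in>UNIV. d i * (z i)^2)"
    unfolding qf_def d_def z_def ..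
  have e4: "y \<bullet> (S *v y) = (\<Sum>i\<in>UNIV. (u i)^2) + y \<bullet> (Q *v y)"
    unfolding S_def S_quad u_def by (simp add: power2_eq_square)
  have CS: "q^2 \<le> (\<Sum>i\<in>UNIV. d i * (u i)^2) * qf X Y \<beta> \<alpha>"
    using weighted_CS[where d=d and u=u and v=z and I=UNIV, OF d0] h1 e1 e3 by simp
  have le: "(\<Sum>i\<in>UNIV. d i * (u i)^2) \<le> q"
  proof -
    have "(\<Sum>i\<in>UNIV. d i * (u i)^2) \<le> (\<Sum>i\<in>UNIV. (u i)^2)"
      by (rule sum_mono) (use d1 d0 in \<open>simp add: mult_left_le_one_le\<close>)
    also have "\<dots> \<le> q" using h2 e4 Q_nonneg[OF Qprior, of y] by linarith
    finally show ?thesis .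
  qed
  have "(\<Sum>i\<in>UNIV. (u i)^2) \<ge> 0" by (simp add: sum_nonneg)
  then have q0: "q \<ge> 0" using h2 e4 Q_nonneg[OF Qprior, of y] by linarith
  have qf0: "qf X Y \<beta> \<alpha> \<ge> 0" by (rule qf_nonneg)
  have "q^2 \<le> q * qf X Y \<beta> \<alpha>"
    using CS mult_right_mono[OF le qf0] by linarith
  then have "q \<le> qf X Y \<beta> \<alpha>"
    using q0 by (cases "q = 0") (auto simp: power2_eq_square qf0)
  then show ?thesis unfolding q_def w_def y_def .
qed



lemma no_qsep:
  fixes X :: "real^'p^'n" and Y :: "real^'n" and v Bhat a :: "real^'p"
  assumes mode: "\<forall>\<beta>. \<beta> \<noteq> Bhat \<longrightarrow> post_dens X Y 0 v \<beta> < post_dens X Y 0 v Bhat"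
    and a: "a \<noteq> 0"
    and qs: "\<forall>i. (Y $ i = 1 \<longrightarrow> X $ i \<bullet> a \<ge> 0) \<and> (Y $ i \<noteq> 1 \<longrightarrow> X $ i \<bullet> a \<le> 0)"
  shows False
proof -
  have "post_dens X Y 0 v Bhat \<le> post_dens X Y 0 v (Bhat + a)"
    unfolding post_dens_def prior_dens_def
  proof (simp, rule prod_mono, intro conjI)
    fix i
    show "0 \<le> (if Y $ i = 1 then Phi (X $ i \<bullet> Bhat) else 1 - Phi (X $ i \<bullet> Bhat))"
      using Phi_nonneg Phi_le1 by (auto simp: le_diff_eq)
    show "(if Y $ i = 1 then Phi (X $ i \<bullet> Bhat) else 1 - Phi (X $ i \<bullet> Bhat))
       \<le> (if Y $ i = 1 then Phi (X $ i \<bullet> (Bhat + a)) else 1 - Phi (X $ i \<bullet> (Bhat + a)))"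
      using qs[rule_format, of i] by (auto simp: inner_add_right intro!: Phi_mono)
  qed
  moreover have "post_dens X Y 0 v (Bhat + a) < post_dens X Y 0 v Bhat"
    using mode a by auto
  ultimately show False by simp
qed

lemma S_pos:
  fixes X :: "real^'p^'n" and Y :: "real^'n" and v Bhat a :: "real^'p"
  assumes Qprior: "pos_def_mat Q \<or> Q = 0"
    and mode: "\<forall>\<beta>. \<beta> \<noteq> Bhat \<longrightarrow> post_dens X Y Q v \<beta> < post_dens X Y Q v Bhat"
    and a: "a \<noteq> 0"
  shows "a \<bullet> ((transpose X ** X + Q) *v a) > 0"
proof (cases "pos_def_mat Q")
  case True
  then have "a \<bullet> (Q *v a) > 0" using a unfolding pos_def_mat_def by auto
  moreover have "(\<Sum>i\<in>UNIV. (X$i \<bullet> a) * (X$i \<bullet> a)) \<ge> 0" by (simp add: sum_nonneg)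
  ultimately show ?thesis unfolding S_quad by linarith
next
  case False
  then have Q0: "Q = 0" using Qprior by auto
  have "\<exists>i. X $ i \<bullet> a \<noteq> 0"
  proof (rule ccontr)
    assume "\<not> ?thesis"
    then show False using no_qsep[where X=X and Y=Y and v=v and Bhat=Bhat and a=a] mode a Q0 by auto
  qed
  then obtain i where i: "X $ i \<bullet> a \<noteq> 0" by auto
  have "(X$i \<bullet> a) * (X$i \<bullet> a) \<le> (\<Sum>i\<in>UNIV. (X$i \<bullet> a) * (X$i \<bullet> a))"
    by (rule member_le_sum) auto
  moreover have "(X$i \<bullet> a) * (X$i \<bullet> a) > 0" using i by (auto simp: zero_less_mult_iff linorder_neq_iff)
  ultimately show ?thesis unfolding S_quad Q0 by simp
qed

lemma S_inv:
  fixes S :: "real^'p^'p"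
  assumes pos: "\<And>a. a \<noteq> 0 \<Longrightarrow> a \<bullet> (S *v a) > 0"
  shows "S ** matrix_inv S = mat 1"
proof -
  have "inj ((*v) S)"
  proof (rule injI)
    fix x y assume "S *v x = S *v y"
    then have "S *v (x - y) = 0" by (simp add: matrix_vector_mult_diff_distrib)
    then have "(x - y) \<bullet> (S *v (x - y)) = 0" by simp
    then show "x = y" using pos[of "x - y"] by (cases "x - y = 0") auto
  qed
  then obtain B where "B ** S = mat 1" using matrix_left_invertible_injective by blast
  then have "invertible S" using invertible_left_inverse by blast
  then have "\<exists>A'. S ** A' = mat 1 \<and> A' ** S = mat 1" unfolding invertible_def .
  then have "S ** matrix_inv S = mat 1 \<and> matrix_inv S ** S = mat 1"
    unfolding matrix_inv_def by (rule someI_ex)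
  then show ?thesis by simp
qed



lemma defn_scale: "defn X Y Q \<beta> (c *\<^sub>R a) = c^2 * defn X Y Q \<beta> a"
  unfolding defn_def
  by (simp add: algebra_simps power_mult_distrib sum_distrib_left power2_eq_square)

lemma SF_scale: "(c *\<^sub>R a) \<bullet> (S *v (c *\<^sub>R a)) = c^2 * (a \<bullet> (S *v a))"
  for S :: "real^'p^'p"
  by (simp add: algebra_simps power2_eq_square)

lemma defn_nonneg: "pos_def_mat Q \<or> Q = 0 \<Longrightarrow> 0 \<le> defn X Y Q \<beta> a"
  unfolding defn_def using Q_nonneg[of Q a] gt_pos[of X Y \<beta>]
  by (intro add_nonneg_nonneg sum_nonneg mult_nonneg_nonneg) (auto simp: less_imp_le)

lemma term_le_defn: "pos_def_mat Q \<or> Q = 0 \<Longrightarrow> gt X Y \<beta> i * (X$i \<bullet> a)^2 \<le> defn X Y Q \<beta> a"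
proof -
  assume Qp: "pos_def_mat Q \<or> Q = 0"
  have "gt X Y \<beta> i * (X$i \<bullet> a)^2 \<le> (\<Sum>i\<in>UNIV. gt X Y \<beta> i * (X $ i \<bullet> a)^2)"
    by (rule member_le_sum) (use gt_pos[of X Y \<beta>] in \<open>auto simp: less_imp_le\<close>)
  then show ?thesis unfolding defn_def using Q_nonneg[OF Qp, of a] by linarith
qed

lemma Q_le_defn: "pos_def_mat Q \<or> Q = 0 \<Longrightarrow> a \<bullet> (Q *v a) \<le> defn X Y Q \<beta> a"
proof -
  assume Qp: "pos_def_mat Q \<or> Q = 0"
  have "0 \<le> (\<Sum>i\<in>UNIV. gt X Y \<beta> i * (X $ i \<bullet> a)^2)"
    by (rule sum_nonneg) (use gt_pos[of X Y \<beta>] in \<open>auto simp: less_imp_le\<close>)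
  then show ?thesis unfolding defn_def by linarith
qed

lemma tendsto_quad: "(f \<longlongrightarrow> a0) F \<Longrightarrow> ((\<lambda>k. f k \<bullet> (S *v f k)) \<longlongrightarrow> a0 \<bullet> (S *v a0)) F"
  for S :: "real^'p^'p"
  by (intro tendsto_inner bounded_linear.tendsto[OF matrix_vector_mul_bounded_linear]) auto

lemma unif:
  fixes X :: "real^'p^'n" and Y :: "real^'n" and Q :: "real^'p^'p" and v Bhat :: "real^'p"
  assumes Y01: "\<forall>i. Y $ i \<in> {0, 1}"
    and Qprior: "pos_def_mat Q \<or> Q = 0"
    and mode: "\<forall>\<beta>. \<beta> \<noteq> Bhat \<longrightarrow> post_dens X Y Q v \<beta> < post_dens X Y Q v Bhat"
  shows "\<exists>c>0. \<forall>t>0. \<forall>\<alpha>. \<alpha> \<noteq> 0 \<longrightarrow>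
     c * (\<alpha> \<bullet> ((transpose X ** X + Q) *v \<alpha>)) \<le> defn X Y Q (Bhat + t *\<^sub>R \<alpha>) \<alpha>"
proof (rule ccontr)
  let ?S = "transpose X ** X + Q"
  assume neg: "\<not> ?thesis"
  have "\<forall>k::nat. \<exists>t \<alpha>. t > 0 \<and> \<alpha> \<noteq> 0 \<and>
      defn X Y Q (Bhat + t *\<^sub>R \<alpha>) \<alpha> < inverse (real (Suc k)) * (\<alpha> \<bullet> (?S *v \<alpha>))"
  proof
    fix k :: nat
    have "inverse (real (Suc k)) > 0" by simp
    then show "\<exists>t \<alpha>. t > 0 \<and> \<alpha> \<noteq> 0 \<and>
      defn X Y Q (Bhat + t *\<^sub>R \<alpha>) \<alpha> < inverse (real (Suc k)) * (\<alpha> \<bullet> (?S *v \<alpha>))"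
      using neg by (force simp: not_le)
  qed
  then obtain T A where TA: "\<And>k. T k > 0" "\<And>k. A k \<noteq> 0"
    "\<And>k. defn X Y Q (Bhat + T k *\<^sub>R A k) (A k) < inverse (real (Suc k)) * (A k \<bullet> (?S *v A k))"
    by metis
  define a where "a k = inverse (norm (A k)) *\<^sub>R A k" for k
  define s where "s k = T k * norm (A k)" for k
  have nA: "\<And>k. norm (A k) > 0" using TA(2) by simp
  have Aeq: "\<And>k. A k = norm (A k) *\<^sub>R a k" unfolding a_def using nA
    by (simp add: less_imp_neq[symmetric])
  have beq: "\<And>k. Bhat + T k *\<^sub>R A k = Bhat + s k *\<^sub>R a k"
    unfolding s_def a_def using nA by (simp add: less_imp_neq[symmetric])
  have na: "\<And>k. norm (a k) = 1" unfolding a_def using nA by (simp add: less_imp_neq[symmetric])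
  have s0: "\<And>k. s k > 0" unfolding s_def using TA(1) nA by simp
  have ineq: "\<And>k. defn X Y Q (Bhat + s k *\<^sub>R a k) (a k) < inverse (real (Suc k)) * (a k \<bullet> (?S *v a k))"
  proof -
    fix k
    have h1: "defn X Y Q (Bhat + s k *\<^sub>R a k) (norm (A k) *\<^sub>R a k) =
        (norm (A k))^2 * defn X Y Q (Bhat + s k *\<^sub>R a k) (a k)" by (rule defn_scale)
    have h2: "(norm (A k) *\<^sub>R a k) \<bullet> (?S *v (norm (A k) *\<^sub>R a k)) = (norm (A k))^2 * (a k \<bullet> (?S *v a k))"
      by (rule SF_scale)
    have "(norm (A k))^2 * defn X Y Q (Bhat + s k *\<^sub>R a k) (a k)
        < (norm (A k))^2 * (inverse (real (Suc k)) * (a k \<bullet> (?S *v a k)))"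
      using TA(3)[of k] unfolding beq h1[unfolded Aeq[symmetric]] h2[unfolded Aeq[symmetric]]
      by (simp add: algebra_simps)
    then show "defn X Y Q (Bhat + s k *\<^sub>R a k) (a k) < inverse (real (Suc k)) * (a k \<bullet> (?S *v a k))"
      using nA[of k] by (simp add: mult_less_cancel_left_pos)
  qed
  define \<tau> where "\<tau> k = s k / (1 + s k)" for k
  have \<tau>01: "\<And>k. \<tau> k \<in> {0..1}"
  proof -
    fix k
    have "0 < 1 + s k" using s0[of k] by simp
    then show "\<tau> k \<in> {0..1}" unfolding \<tau>_def using s0[of k] by (simp add: divide_le_eq)
  qed
  have sc: "seq_compact (sphere (0::real^'p) 1 \<times> {0..1::real})"
    by (intro compact_imp_seq_compact compact_Times compact_sphere compact_Icc)
  have mem: "\<forall>k. (\<lambda>k. (a k, \<tau> k)) k \<in> sphere (0::real^'p) 1 \<times> {0..1::real}"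
    using na \<tau>01 by auto
  obtain l r where l: "l \<in> sphere (0::real^'p) 1 \<times> {0..1::real}" and r: "strict_mono (r::nat\<Rightarrow>nat)"
    and lim: "((\<lambda>k. (a k, \<tau> k)) \<circ> r) \<longlonglongrightarrow> l"
    by (rule seq_compactE[OF sc mem])
  obtain a0 \<tau>0 where l0: "l = (a0, \<tau>0)" by (cases l)
  have la: "(\<lambda>k. a (r k)) \<longlonglongrightarrow> a0" using tendsto_fst[OF lim] l0 by (simp add: o_def)
  have lt: "(\<lambda>k. \<tau> (r k)) \<longlonglongrightarrow> \<tau>0" using tendsto_snd[OF lim] l0 by (simp add: o_def)
  have na0: "norm a0 = 1" and t01: "\<tau>0 \<in> {0..1}" using l l0 by auto
  have a0nz: "a0 \<noteq> 0" using na0 by auto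
  define \<beta> where "\<beta> k = Bhat + s (r k) *\<^sub>R a (r k)" for k
  define e where "e k = defn X Y Q (\<beta> k) (a (r k))" for k
  have e0: "\<And>k. e k \<ge> 0" unfolding e_def using defn_nonneg[OF Qprior] by blast
  have inv_lim: "(\<lambda>k. inverse (real (Suc (r k)))) \<longlonglongrightarrow> 0"
    using LIMSEQ_subseq_LIMSEQ[OF LIMSEQ_inverse_real_of_nat r] by (simp add: o_def)
  have e_lim: "e \<longlonglongrightarrow> 0"
  proof (rule tendsto_sandwich[where f = "\<lambda>k. 0" and h = "\<lambda>k. inverse (real (Suc (r k))) * (a (r k) \<bullet> (?S *v a (r k)))"])
    show "eventually (\<lambda>k. 0 \<le> e k) sequentially" using e0 by simp
    show "eventually (\<lambda>k. e k \<le> inverse (real (Suc (r k))) * (a (r k) \<bullet> (?S *v a (r k)))) sequentially"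
      using ineq unfolding e_def \<beta>_def by (simp add: less_imp_le)
    show "(\<lambda>k. inverse (real (Suc (r k))) * (a (r k) \<bullet> (?S *v a (r k)))) \<longlonglongrightarrow> 0"
      using tendsto_mult[OF inv_lim tendsto_quad[OF la, of ?S]] by simp
  qed simp
  have term_lim: "\<And>i. (\<lambda>k. gt X Y (\<beta> k) i * (X$i \<bullet> a (r k))^2) \<longlonglongrightarrow> 0"
  proof -
    fix i
    show "(\<lambda>k. gt X Y (\<beta> k) i * (X$i \<bullet> a (r k))^2) \<longlonglongrightarrow> 0"
    proof (rule tendsto_sandwich[where f = "\<lambda>k. 0" and h = e])
      show "eventually (\<lambda>k. 0 \<le> gt X Y (\<beta> k) i * (X$i \<bullet> a (r k))^2) sequentially"
        using gt_pos[of X Y] by (simp add: less_imp_le)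
      show "eventually (\<lambda>k. gt X Y (\<beta> k) i * (X$i \<bullet> a (r k))^2 \<le> e k) sequentially"
        unfolding e_def by (intro always_eventually allI) (rule term_le_defn[OF Qprior])
    qed (use e_lim in simp_all)
  qed
  have Qa0: "a0 \<bullet> (Q *v a0) = 0"
  proof (rule LIMSEQ_unique[OF tendsto_quad[OF la, of Q]])
    show "(\<lambda>k. a (r k) \<bullet> (Q *v a (r k))) \<longlonglongrightarrow> 0"
    proof (rule tendsto_sandwich[where f = "\<lambda>k. 0" and h = e])
      show "eventually (\<lambda>k. 0 \<le> a (r k) \<bullet> (Q *v a (r k))) sequentially"
        using Q_nonneg[OF Qprior] by simp
      show "eventually (\<lambda>k. a (r k) \<bullet> (Q *v a (r k)) \<le> e k) sequentially"
        unfolding e_def by (intro always_eventually allI) (rule Q_le_defn[OF Qprior])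
    qed (use e_lim in simp_all)
  qed
  have qsep: "\<forall>i. (Y $ i = 1 \<longrightarrow> X $ i \<bullet> a0 \<ge> 0) \<and> (Y $ i \<noteq> 1 \<longrightarrow> X $ i \<bullet> a0 \<le> 0)"
  proof
    fix i
    define \<sigma> where "\<sigma> = (if Y $ i = 1 then 1 else -1 :: real)"
    have gt_eq: "\<And>b. gt X Y b i = gfun (\<sigma> * (X $ i \<bullet> b))"
      unfolding gt_def \<sigma>_def by simp
    have "\<sigma> * (X $ i \<bullet> a0) \<ge> 0"
    proof (rule ccontr)
      assume "\<not> \<sigma> * (X $ i \<bullet> a0) \<ge> 0"
      then have neg0: "\<sigma> * (X $ i \<bullet> a0) < 0" by simp
      then have Xa0: "X $ i \<bullet> a0 \<noteq> 0" by auto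
      have sq0: "(X $ i \<bullet> a0)^2 > 0" using Xa0 by simp
      have xi_lim: "(\<lambda>k. X $ i \<bullet> a (r k)) \<longlonglongrightarrow> X $ i \<bullet> a0"
        by (intro tendsto_intros la)
      show False
      proof (cases "\<tau>0 < 1")
        case True
        have seq: "\<And>k. s k = \<tau> k / (1 - \<tau> k)"
          unfolding \<tau>_def using s0 by (simp add: field_simps add_pos_pos less_imp_neq[symmetric])
        have s_lim: "(\<lambda>k. s (r k)) \<longlonglongrightarrow> \<tau>0 / (1 - \<tau>0)"
          unfolding seq using True by (intro tendsto_intros lt) auto
        have arg_lim: "(\<lambda>k. \<sigma> * (X $ i \<bullet> \<beta> k)) \<longlonglongrightarrow> \<sigma> * (X $ i \<bullet> (Bhat + (\<tau>0 / (1 - \<tau>0)) *\<^sub>R a0))"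
          unfolding \<beta>_def by (intro tendsto_intros s_lim la)
        have "(\<lambda>k. gt X Y (\<beta> k) i * (X$i \<bullet> a (r k))^2) \<longlonglongrightarrow>
            gfun (\<sigma> * (X $ i \<bullet> (Bhat + (\<tau>0 / (1 - \<tau>0)) *\<^sub>R a0))) * (X$i \<bullet> a0)^2"
          unfolding gt_eq by (intro tendsto_intros isCont_tendsto_compose[OF gfun_cont arg_lim] xi_lim)
        then have "gfun (\<sigma> * (X $ i \<bullet> (Bhat + (\<tau>0 / (1 - \<tau>0)) *\<^sub>R a0))) * (X$i \<bullet> a0)^2 = 0"
          using term_lim[of i] by (rule LIMSEQ_unique)
        then show False using gfun_pos sq0 by (metis mult_eq_0_iff less_irrefl)
      next
        case False
        then have t1: "\<tau>0 = 1" using t01 by auto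
        define \<delta> where "\<delta> = - (\<sigma> * (X $ i \<bullet> a0)) / 2"
        have \<delta>0: "\<delta> > 0" unfolding \<delta>_def using neg0 by simp
        define b where "b = \<bar>X $ i \<bullet> Bhat\<bar>"
        define M where "M = (b + 2) / \<delta>"
        have M0: "M \<ge> 0" unfolding M_def b_def using \<delta>0 by simp
        have ev1: "eventually (\<lambda>k. \<sigma> * (X $ i \<bullet> a (r k)) < - \<delta>) sequentially"
        proof (rule order_tendstoD(2))
          show "(\<lambda>k. \<sigma> * (X $ i \<bullet> a (r k))) \<longlonglongrightarrow> \<sigma> * (X $ i \<bullet> a0)"
            by (intro tendsto_intros xi_lim)
          show "\<sigma> * (X $ i \<bullet> a0) < - \<delta>" unfolding \<delta>_def using neg0 by simp
        qed
        have ev2: "eventually (\<lambda>k. \<tau> (r k) > M / (1 + M)) sequentially"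
        proof (rule order_tendstoD(1)[OF lt])
          show "M / (1 + M) < \<tau>0" unfolding t1 using M0 by simp
        qed
        have ev3: "eventually (\<lambda>k. 1/2 * (X$i \<bullet> a (r k))^2 \<le> gt X Y (\<beta> k) i * (X$i \<bullet> a (r k))^2) sequentially"
          using ev1 ev2
        proof eventually_elim
          case (elim k)
          have "s (r k) > M"
          proof -
            have "M / (1 + M) < s (r k) / (1 + s (r k))" using elim(2) unfolding \<tau>_def .
            then have "M * (1 + s (r k)) < s (r k) * (1 + M)"
              using M0 s0[of "r k"] by (simp add: divide_simps)
            then show ?thesis by (simp add: algebra_simps)
          qed
          have "\<sigma> * (X $ i \<bullet> \<beta> k) = \<sigma> * (X $ i \<bullet> Bhat) + s (r k) * (\<sigma> * (X $ i \<bullet> a (r k)))"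
            unfolding \<beta>_def by (simp add: inner_add_right algebra_simps)
          also have "\<dots> \<le> b + s (r k) * (- \<delta>)"
          proof -
            have "\<sigma> * (X $ i \<bullet> Bhat) \<le> b" unfolding b_def \<sigma>_def by auto
            moreover have "s (r k) * (\<sigma> * (X $ i \<bullet> a (r k))) \<le> s (r k) * (- \<delta>)"
              using mult_left_mono[OF less_imp_le[OF elim(1)] less_imp_le[OF s0[of "r k"]]] by simp
            ultimately show ?thesis by linarith
          qed
          also have "\<dots> \<le> b + M * (- \<delta>)"
            using \<open>s (r k) > M\<close> \<delta>0 by (simp add: less_imp_le)
          also have "\<dots> = -2" unfolding M_def using \<delta>0 by simp
          finally have "gfun (\<sigma> * (X $ i \<bullet> \<beta> k)) \<ge> 1/2" by (rule gfun_lower)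
          then show ?case unfolding gt_eq by (rule mult_right_mono) simp
        qed
        have "1/2 * (X$i \<bullet> a0)^2 \<le> 0"
          by (rule tendsto_le[OF _ term_lim[of i] _ ev3]) (auto intro!: tendsto_intros xi_lim)
        then show False using sq0 by simp
      qed
    qed
    then show "(Y $ i = 1 \<longrightarrow> X $ i \<bullet> a0 \<ge> 0) \<and> (Y $ i \<noteq> 1 \<longrightarrow> X $ i \<bullet> a0 \<le> 0)"
      unfolding \<sigma>_def by auto
  qed
  show False
  proof (cases "pos_def_mat Q")
    case True
    then show False using Qa0 a0nz unfolding pos_def_mat_def by auto
  next
    case False
    then have Q0: "Q = 0" using Qprior by auto
    show False using no_qsep[where X=X and Y=Y and v=v and Bhat=Bhat and a=a0] mode Q0 a0nz qsep
      by auto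
  qed
qed



theorem proposition15:
  fixes X :: "real^'p^'n" and Y :: "real^'n" and Q :: "real^'p^'p"
    and v :: "real^'p" and Bhat :: "real^'p"
  assumes Y01: "\<forall>i. Y $ i \<in> {0, 1}"
    and Qprior: "pos_def_mat Q \<or> Q = 0"
    and proper: "integrable lborel (post_dens X Y Q v)"
    and mode: "\<forall>\<beta>. \<beta> \<noteq> Bhat \<longrightarrow> post_dens X Y Q v \<beta> < post_dens X Y Q v Bhat"
  shows "(let \<Sigma> = transpose X ** X + Q in
          (SUP t\<in>{0<..<1::real}. SUP \<alpha>\<in>{\<alpha>::real^'p. \<alpha> \<noteq> 0}.
             ereal (((transpose X ** Dmat X Y (Bhat + t *\<^sub>R \<alpha>) ** X) *v \<alpha>) \<bullet>
                      (matrix_inv \<Sigma> *v ((transpose X ** Dmat X Y (Bhat + t *\<^sub>R \<alpha>) ** X) *v \<alpha>))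
                    / (\<alpha> \<bullet> (\<Sigma> *v \<alpha>))))) < 1"
proof -
  define S where "S = transpose X ** X + Q"
  have Spos: "\<And>a. a \<noteq> 0 \<Longrightarrow> a \<bullet> (S *v a) > 0"
    unfolding S_def using S_pos[OF Qprior mode] by blast
  have Sinv: "S ** matrix_inv S = mat 1" by (rule S_inv[OF Spos])
  obtain c where c0: "c > 0" and cb: "\<forall>t>0. \<forall>\<alpha>. \<alpha> \<noteq> 0 \<longrightarrow>
     c * (\<alpha> \<bullet> (S *v \<alpha>)) \<le> defn X Y Q (Bhat + t *\<^sub>R \<alpha>) \<alpha>"
    using unif[OF Y01 Qprior mode] unfolding S_def by blast
  have bound: "((transpose X ** Dmat X Y (Bhat + t *\<^sub>R \<alpha>) ** X) *v \<alpha>) \<bullet>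
        (matrix_inv S *v ((transpose X ** Dmat X Y (Bhat + t *\<^sub>R \<alpha>) ** X) *v \<alpha>))
        / (\<alpha> \<bullet> (S *v \<alpha>)) \<le> 1 - c"
    if t: "t \<in> {0<..<1}" and a: "\<alpha> \<noteq> 0" for t \<alpha>
  proof -
    let ?\<beta> = "Bhat + t *\<^sub>R \<alpha>"
    have p: "\<alpha> \<bullet> (S *v \<alpha>) > 0" using Spos[OF a] .
    have r1: "((transpose X ** Dmat X Y ?\<beta> ** X) *v \<alpha>) \<bullet>
        (matrix_inv S *v ((transpose X ** Dmat X Y ?\<beta> ** X) *v \<alpha>)) \<le> qf X Y ?\<beta> \<alpha>"
    proof -
      have Sinv': "(transpose X ** X + Q) ** matrix_inv S = mat 1" using Sinv by (simp add: S_def)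
      show ?thesis by (rule ratio_le[OF Y01 Qprior Sinv'])
    qed
    have sp: "\<alpha> \<bullet> (S *v \<alpha>) = qf X Y ?\<beta> \<alpha> + defn X Y Q ?\<beta> \<alpha>"
      unfolding S_def by (rule S_split)
    have cd: "c * (\<alpha> \<bullet> (S *v \<alpha>)) \<le> defn X Y Q ?\<beta> \<alpha>" using cb t a by auto
    have "qf X Y ?\<beta> \<alpha> \<le> (1 - c) * (\<alpha> \<bullet> (S *v \<alpha>))" using sp cd by (simp add: algebra_simps)
    then have "((transpose X ** Dmat X Y ?\<beta> ** X) *v \<alpha>) \<bullet>
        (matrix_inv S *v ((transpose X ** Dmat X Y ?\<beta> ** X) *v \<alpha>)) \<le> (1 - c) * (\<alpha> \<bullet> (S *v \<alpha>))"
      using r1 by linarith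
    then show ?thesis using p by (simp add: divide_le_eq)
  qed
  have "(SUP t\<in>{0<..<1::real}. SUP \<alpha>\<in>{\<alpha>::real^'p. \<alpha> \<noteq> 0}.
             ereal (((transpose X ** Dmat X Y (Bhat + t *\<^sub>R \<alpha>) ** X) *v \<alpha>) \<bullet>
                      (matrix_inv S *v ((transpose X ** Dmat X Y (Bhat + t *\<^sub>R \<alpha>) ** X) *v \<alpha>))
                    / (\<alpha> \<bullet> (S *v \<alpha>)))) \<le> ereal (1 - c)"
    by (intro SUP_least) (use bound in auto)
  also have "ereal (1 - c) < 1" using c0 by simp
  finally show ?thesis unfolding Let_def S_def .
qed


end
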